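(* Let $(I,\leq)$ be a finite poset with a unique maximal element, and let $F,G\subseteq K_I$ be nonzero subfunctors of the constant functor $K_I$. Then the following are equivalent: (1) $F\preccurlyeq G$, i.e.\ $\mathrm{supp}(F)\supseteq\mathrm{supp}(G)$; (2) $\mathrm{Nat}(G,F)\neq0$; (3) $\dim\mathrm{Nat}(G,F)=1$.
   Context: $K$ is a field; $K_I\colon I\to\mathrm{vect}_K$ is the constant functor with value $K$ and identity transition maps. For a subfunctor $F\subseteq K_I$, $\mathrm{supp}(F)=\{v\in I\mid F(v)\neq0\}$. $\mathrm{Nat}(G,F)$ denotes the $K$-vector space of natural transformations $G\to F$. *)

theory Defs
  imports Complex_Main "HOL-Library.Function_Algebras"
begin

text \<open>A subfunctor F of the constant functor K_I (value K, identity transition maps),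
  for I a poset given by the order on the type 'i and K a field 'k:
  each F v is a K-subspace of K, and for v \<le> w the identity transition map
  K(v) \<rightarrow> K(w) restricts to F(v) \<rightarrow> F(w), i.e. F v \<subseteq> F w.\<close>

definition is_subspace_K :: "'k::field set \<Rightarrow> bool" where
  "is_subspace_K S \<longleftrightarrow> 0 \<in> S \<and> (\<forall>x\<in>S. \<forall>y\<in>S. x + y \<in> S) \<and> (\<forall>c. \<forall>x\<in>S. c * x \<in> S)"

definition subfunctor_const :: "('i::order \<Rightarrow> 'k::field set) \<Rightarrow> bool" where
  "subfunctor_const F \<longleftrightarrow> (\<forall>v. is_subspace_K (F v)) \<and> (\<forall>v w. v \<le> w \<longrightarrow> F v \<subseteq> F w)"

definition zero_functor :: "'i \<Rightarrow> 'k::field set" where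
  "zero_functor = (\<lambda>v. {0})"

definition supp :: "('i \<Rightarrow> 'k::field set) \<Rightarrow> 'i set" where
  "supp F = {v. F v \<noteq> {0}}"

text \<open>A component
  eta v : G v \<rightarrow> F v is represented by a function 'k \<Rightarrow> 'k that is K-linear on G v,
  maps G v into F v and is (extensionally) 0 outside G v.  Naturality w.r.t. the
  identity transition maps: for v \<le> w and x \<in> G v, eta w x = eta v x.\<close>

definition nat_trans :: "('i::order \<Rightarrow> 'k::field set) \<Rightarrow> ('i \<Rightarrow> 'k set) \<Rightarrow> ('i \<Rightarrow> 'k \<Rightarrow> 'k) \<Rightarrow> bool" where
  "nat_trans G F \<eta> \<longleftrightarrow>
     (\<forall>v x. x \<notin> G v \<longrightarrow> \<eta> v x = 0) \<and>
     (\<forall>v. \<forall>x\<in>G v. \<eta> v x \<in> F v) \<and>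
     (\<forall>v. \<forall>x\<in>G v. \<forall>y\<in>G v. \<eta> v (x + y) = \<eta> v x + \<eta> v y) \<and>
     (\<forall>v c. \<forall>x\<in>G v. \<eta> v (c * x) = c * \<eta> v x) \<and>
     (\<forall>v w. v \<le> w \<longrightarrow> (\<forall>x\<in>G v. \<eta> w x = \<eta> v x))"

definition Nat :: "('i::order \<Rightarrow> 'k::field set) \<Rightarrow> ('i \<Rightarrow> 'k set) \<Rightarrow> ('i \<Rightarrow> 'k \<Rightarrow> 'k) set" where
  "Nat G F = {\<eta>. nat_trans G F \<eta>}"

definition fscale :: "'k::field \<Rightarrow> ('i \<Rightarrow> 'k \<Rightarrow> 'k) \<Rightarrow> ('i \<Rightarrow> 'k \<Rightarrow> 'k)" where
  "fscale c \<eta> = (\<lambda>v x. c * \<eta> v x)"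

lemma vector_space_fscale: "vector_space (fscale :: 'k::field \<Rightarrow> _)"
  by unfold_locales (auto simp: fscale_def fun_eq_iff algebra_simps)

abbreviation dimK :: "('i \<Rightarrow> 'k::field \<Rightarrow> 'k) set \<Rightarrow> nat" where
  "dimK S \<equiv> vector_space.dim fscale S"

end

theory Submission
  imports Defs
begin

lemma subspace_cases:
  fixes X :: "'k::field set"
  assumes "is_subspace_K X"
  shows "X = {0} \<or> X = UNIV"
proof (cases "X \<subseteq> {0}")
  case True then show ?thesis using assms unfolding is_subspace_K_def by auto
next
  case False
  then obtain x where x: "x \<in> X" "x \<noteq> 0" by auto
  have "y \<in> X" for y
  proof -
    have "(y / x) * x \<in> X" using assms x unfolding is_subspace_K_def by blast
    then show ?thesis using x by simp
  qed
  then show ?thesis by auto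
qed

theorem proposition6p1:
  fixes F G :: "'i::{finite, order} \<Rightarrow> 'k::field set"
  assumes unique_max: "\<exists>!m::'i. \<forall>x. m \<le> x \<longrightarrow> x = m"
    and F: "subfunctor_const F" and G: "subfunctor_const G"
    and F_nz: "F \<noteq> zero_functor" and G_nz: "G \<noteq> zero_functor"
  shows "(supp G \<subseteq> supp F \<longleftrightarrow> Nat G F \<noteq> {\<lambda>v x. 0})
       \<and> (Nat G F \<noteq> {\<lambda>v x. 0} \<longleftrightarrow> dimK (Nat G F) = 1)"
proof -
  interpret vs: vector_space "fscale :: 'k \<Rightarrow> ('i \<Rightarrow> 'k \<Rightarrow> 'k) \<Rightarrow> _"
    by (rule vector_space_fscale)
  obtain m :: 'i where m: "\<forall>x. m \<le> x \<longrightarrow> x = m" using unique_max by blast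
  have lem: "v \<le> m" for v
  proof -
    obtain m' where m': "v \<le> m'" "\<forall>b\<in>UNIV. m' \<le> b \<longrightarrow> m' = b"
      using finite_has_maximal2[of "UNIV::'i set" v] by auto
    have "m' = m" using unique_max m m'(2) by blast
    then show ?thesis using m' by simp
  qed
  have UNZ: "(UNIV::'k set) \<noteq> {0}" by (metis one_neq_zero singletonD UNIV_I)
  define S where "S = supp G"
  have Gc: "G v = {0} \<or> G v = UNIV" for v
    using G subspace_cases[of "G v"] unfolding subfunctor_const_def by blast
  have Fc: "F v = {0} \<or> F v = UNIV" for v
    using F subspace_cases[of "F v"] unfolding subfunctor_const_def by blast
  have Gmono: "v \<le> w \<Longrightarrow> G v \<subseteq> G w" for v w using G unfolding subfunctor_const_def by blast
  have GS: "v \<in> S \<longleftrightarrow> G v = UNIV" for v using Gc[of v] using UNZ unfolding S_def supp_def by auto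
  have FS: "v \<in> supp F \<longleftrightarrow> F v = UNIV" for v using Fc[of v] UNZ unfolding supp_def by auto
  have GnS: "v \<notin> S \<longleftrightarrow> G v = {0}" for v using Gc[of v] using UNZ unfolding S_def supp_def by auto
  obtain v0 where v0: "v0 \<in> S"
    using G_nz unfolding S_def supp_def zero_functor_def by (auto simp: fun_eq_iff)
  have mS: "m \<in> S" using v0 Gmono[OF lem[of v0]] GS by auto
  define e :: "'i \<Rightarrow> 'k \<Rightarrow> 'k" where "e = (\<lambda>v x. if v \<in> S then x else 0)"
  have e_nz: "e \<noteq> (\<lambda>v x. 0)"
  proof
    assume "e = (\<lambda>v x. 0)"
    then have "e v0 1 = 0" by simp
    then show False using v0 by (simp add: e_def)
  qed
  have a: "\<eta> = fscale (\<eta> m 1) e" if "\<eta> \<in> Nat G F" for \<eta>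
  proof -
    have n: "nat_trans G F \<eta>" using that by (simp add: Nat_def)
    have key: "\<eta> v x = \<eta> m 1 * e v x" for v x
    proof (cases "v \<in> S")
      case True
      have "\<eta> v (x * 1) = x * \<eta> v 1" using n True GS unfolding nat_trans_def by blast
      moreover have "\<eta> m 1 = \<eta> v 1" using n True GS lem[of v] unfolding nat_trans_def by blast
      ultimately show ?thesis using True by (simp add: e_def)
    next
      case False
      show ?thesis
      proof (cases "x = 0")
        case True
        have "\<eta> v (0 * 0) = 0 * \<eta> v 0" using n False GnS unfolding nat_trans_def by blast
        then show ?thesis using True False by (simp add: e_def)
      next
        case False2: False
        then have "x \<notin> G v" using False GnS by auto
        then have "\<eta> v x = 0" using conjunct1[OF n[unfolded nat_trans_def]] by simp
        then show ?thesis using False by (simp add: e_def)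
      qed
    qed
    show ?thesis unfolding fscale_def by (intro ext) (rule key)
  qed
  have b: "fscale c e \<in> Nat G F" if cs: "c = 0 \<or> S \<subseteq> supp F" for c
  proof -
    have 1: "fscale c e v x = 0" if "x \<notin> G v" for v x
    proof -
      have "v \<notin> S" using that GS by auto
      then show ?thesis by (simp add: fscale_def e_def)
    qed
    have 2: "fscale c e v x \<in> F v" if "x \<in> G v" for v x
    proof (cases "v \<in> S")
      case True
      show ?thesis
      proof (cases "c = 0")
        case True
        then show ?thesis using F unfolding subfunctor_const_def is_subspace_K_def
          by (simp add: fscale_def)
      next
        case False
        then have "F v = UNIV" using cs \<open>v \<in> S\<close> FS by auto
        then show ?thesis by simp
      qed
    next
      case False
      then show ?thesis using F unfolding subfunctor_const_def is_subspace_K_def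
        by (simp add: fscale_def e_def)
    qed
    have 3: "fscale c e v (x + y) = fscale c e v x + fscale c e v y" for v x y
      by (simp add: fscale_def e_def algebra_simps)
    have 4: "fscale c e v (d * x) = d * fscale c e v x" for v d x
      by (simp add: fscale_def e_def algebra_simps)
    have 5: "fscale c e w x = fscale c e v x" if "v \<le> w" "x \<in> G v" for v w x
    proof (cases "v \<in> S")
      case True
      then have "w \<in> S" using Gmono[OF that(1)] GS by auto
      then show ?thesis using True by (simp add: fscale_def e_def)
    next
      case False
      then have "x = 0" using that(2) GnS by auto
      then show ?thesis by (simp add: fscale_def e_def)
    qed
    show ?thesis unfolding Nat_def nat_trans_def using 1 2 3 4 5 by blast
  qed
  have zeroN: "(\<lambda>v x. 0) \<in> Nat G F"
    using b[of 0] by (simp add: fscale_def)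
  have d: "Nat G F \<noteq> {\<lambda>v x. 0} \<longleftrightarrow> S \<subseteq> supp F"
  proof
    assume "Nat G F \<noteq> {\<lambda>v x. 0}"
    then obtain \<eta> where h: "\<eta> \<in> Nat G F" "\<eta> \<noteq> (\<lambda>v x. 0)" using zeroN by blast
    have c0: "\<eta> m 1 \<noteq> 0"
    proof
      assume "\<eta> m 1 = 0"
      then have "\<eta> = (\<lambda>v x. 0)" using a[OF h(1)] by (simp add: fscale_def)
      then show False using h(2) by simp
    qed
    show "S \<subseteq> supp F"
    proof
      fix v assume v: "v \<in> S"
      have n2: "\<forall>v. \<forall>x\<in>G v. \<eta> v x \<in> F v" using h(1) unfolding Nat_def nat_trans_def by simp
      have "\<eta> v 1 \<in> F v" using n2 v GS by simp
      moreover have "\<eta> v 1 = fscale (\<eta> m 1) e v 1" by (metis a[OF h(1)])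
      then have "\<eta> v 1 = \<eta> m 1" using v by (simp add: fscale_def e_def)
      ultimately show "v \<in> supp F" using c0 unfolding supp_def by auto
    qed
  next
    assume sub: "S \<subseteq> supp F"
    have "fscale 1 e \<in> Nat G F" using b sub by blast
    moreover have "fscale 1 e = e" by (simp add: fscale_def)
    ultimately show "Nat G F \<noteq> {\<lambda>v x. 0}" using e_nz by auto
  qed
  have dim: "dimK (Nat G F) = 1 \<longleftrightarrow> Nat G F \<noteq> {\<lambda>v x. 0}"
  proof (cases "S \<subseteq> supp F")
    case True
    have "Nat G F = range (\<lambda>c. fscale c e)" using a b True by blast
    also have "\<dots> = vs.span {e}" by (rule vs.span_singleton[symmetric])
    finally have "dimK (Nat G F) = 1"
      using vs.dim_span_eq_card_independent[of "{e}"] e_nz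
      by (simp add: zero_fun_def)
    then show ?thesis using d True by simp
  next
    case False
    then have N: "Nat G F = {\<lambda>v x. 0}" using d by simp
    have "vs.span {} = {\<lambda>v x. 0}" by (simp add: zero_fun_def)
    then have "dimK (Nat G F) = 0" using N vs.dim_span_eq_card_independent[of "{}"] vs.independent_empty by simp
    then show ?thesis using N by simp
  qed
  show ?thesis using d dim S_def by blast
qed

end
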